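(* Let $R$ be a commutative ring. Let $0\to P\xrightarrow{f}F\xrightarrow{g}M\to 0$ be a $w$-split exact sequence of $R$-modules, with fixed $J=\langle d_1,\dots,d_n\rangle\in\mathrm{GV}(R)$ and $h_1,\dots,h_n\in\mathrm{Hom}_R(M,F)$ satisfying $gh_k=\eta^M_{d_k}$. Suppose $F=\bigoplus_{i\in I}F_i$ with each $F_i$ a projective submodule. Let $\mathcal S_1$ be a set of subsets of $I$, totally ordered by inclusion, such that $h_k(M(H_s))\subseteq F(H_s)$ for every $H_s\in\mathcal S_1$ and every $k=1,\dots,n$. Put $H=\bigcup_{H_s\in\mathcal S_1}H_s$. Then: (1) $\bigcup_{H_s\in\mathcal S_1}F(H_s)=F(H)$, which is therefore projective. Moreover, $\bigcup_{H_s\in\mathcal S_1}P(H_s)=P(H)$ and $\bigcup_{H_s\in\mathcal S_1}M(H_s)=M(H)$. (2) $h_k(M(H))\subseteq F(H)$ for all $k=1,\dots,n$. Hence the exact sequence $0\to P(H)\xrightarrow{f|_{P(H)}}F(H)\xrightarrow{g|_{F(H)}}M(H)\to 0$ is $w$-split (witnessed by $J$ and the restrictions of the $h_k$).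
   Context: $R$ is a commutative ring with identity. For an $R$-module $X$ and $s\in R$, $\eta^X_s$ is multiplication by $s$. An ideal $J$ is a GV-ideal if $J$ is finitely generated and the natural map $R\to\mathrm{Hom}_R(J,R)$ is an isomorphism; $\mathrm{GV}(R)$ is the set of GV-ideals. A short exact sequence $0\to A\xrightarrow{f}B\xrightarrow{g}C\to 0$ is $w$-split if there exist $J=\langle d_1,\dots,d_n\rangle\in\mathrm{GV}(R)$ and $h_k\in\mathrm{Hom}_R(C,B)$ with $gh_k=\eta^C_{d_k}$ for all $k$. Notation: for $H\subseteq I$ nonempty, $F(H)=\bigoplus_{j\in H}F_j$, $M(H)=g(F(H))$ and $P(H)=f^{-1}(\ker(g|_{F(H)}))$. For $H=\emptyset$, $F(H)=P(H)=M(H)=0$. *)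

theory Defs
  imports Main "HOL.Modules"
begin

definition lin_on :: "('r \<Rightarrow> 'a::ab_group_add \<Rightarrow> 'a) \<Rightarrow> ('r \<Rightarrow> 'b::ab_group_add \<Rightarrow> 'b) \<Rightarrow> 'a set \<Rightarrow> 'b set \<Rightarrow> ('a \<Rightarrow> 'b) \<Rightarrow> bool" where
  "lin_on sA sB A B h \<longleftrightarrow> (\<forall>x\<in>A. h x \<in> B) \<and>
     (\<forall>x\<in>A. \<forall>y\<in>A. h (x + y) = h x + h y) \<and>
     (\<forall>r. \<forall>x\<in>A. h (sA r x) = sB r (h x))"

definition gen_ideal :: "nat \<Rightarrow> (nat \<Rightarrow> 'r::comm_ring_1) \<Rightarrow> 'r set" where
  "gen_ideal n d = {\<Sum>k<n. a k * d k | a. True}"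

text \<open>GV-ideal: finitely generated J such that the natural map R \<rightarrow> Hom_R(J,R),
  r \<mapsto> (x \<mapsto> r x), is an isomorphism (injective and surjective).\<close>
definition GV_ideal :: "nat \<Rightarrow> (nat \<Rightarrow> 'r::comm_ring_1) \<Rightarrow> bool" where
  "GV_ideal n d \<longleftrightarrow>
     (\<forall>r. (\<forall>x\<in>gen_ideal n d. r * x = 0) \<longrightarrow> r = 0) \<and>
     (\<forall>\<phi>. lin_on (*) (*) (gen_ideal n d) UNIV \<phi> \<longrightarrow> (\<exists>r. \<forall>x\<in>gen_ideal n d. \<phi> x = r * x))"

definition exact_ses where
  "exact_ses sA sB sC A B C f g \<longleftrightarrow>
     lin_on sA sB A B f \<and> lin_on sB sC B C g \<and> inj_on f A \<and> g ` B = C \<and>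
     {x \<in> B. g x = 0} = f ` A"

definition w_split_via where
  "w_split_via sA sB sC A B C f g n d h \<longleftrightarrow>
     exact_ses sA sB sC A B C f g \<and> GV_ideal n d \<and>
     (\<forall>k<n. lin_on sC sB C B (h k) \<and> (\<forall>x\<in>C. g (h k x) = sC (d k) x))"

text \<open>Projectivity (lifting property) of a submodule A, tested against modules
  whose carriers live in the types 'x and 'y.\<close>
definition projective ::
  "'x::ab_group_add itself \<Rightarrow> 'y::ab_group_add itself \<Rightarrow> ('r::comm_ring_1 \<Rightarrow> 'a \<Rightarrow> 'a) \<Rightarrow> 'a::ab_group_add set \<Rightarrow> bool" where
  "projective _ _ sA A \<longleftrightarrow>
     (\<forall>(sX :: 'r \<Rightarrow> 'x \<Rightarrow> 'x) (sY :: 'r \<Rightarrow> 'y \<Rightarrow> 'y) X Y p \<phi>.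
        module sX \<and> module sY \<and> module.subspace sX X \<and> module.subspace sY Y \<and>
        lin_on sX sY X Y p \<and> p ` X = Y \<and> lin_on sA sY A Y \<phi> \<longrightarrow>
        (\<exists>\<psi>. lin_on sA sX A X \<psi> \<and> (\<forall>a\<in>A. p (\<psi> a) = \<phi> a)))"

definition Fsum :: "('i \<Rightarrow> 'f::ab_group_add set) \<Rightarrow> 'i set \<Rightarrow> 'f set" where
  "Fsum F H = {\<Sum>i\<in>S. x i | S x. finite S \<and> S \<subseteq> H \<and> (\<forall>i\<in>S. x i \<in> F i)}"

definition Msub :: "('f \<Rightarrow> 'm) \<Rightarrow> ('i \<Rightarrow> 'f::ab_group_add set) \<Rightarrow> 'i set \<Rightarrow> 'm set" where
  "Msub g F H = g ` Fsum F H"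

definition Psub :: "('p \<Rightarrow> 'f) \<Rightarrow> ('f \<Rightarrow> 'm::zero) \<Rightarrow> ('i \<Rightarrow> 'f::ab_group_add set) \<Rightarrow> 'i set \<Rightarrow> 'p set" where
  "Psub f g F H = f -` {x \<in> Fsum F H. g x = 0}"

definition internal_direct_sum :: "('r::comm_ring_1 \<Rightarrow> 'f \<Rightarrow> 'f) \<Rightarrow> ('i \<Rightarrow> 'f::ab_group_add set) \<Rightarrow> 'i set \<Rightarrow> bool" where
  "internal_direct_sum sF F I \<longleftrightarrow>
     (\<forall>i\<in>I. module.subspace sF (F i)) \<and> Fsum F I = UNIV \<and>
     (\<forall>S x. finite S \<and> S \<subseteq> I \<and> (\<forall>i\<in>S. x i \<in> F i) \<and> (\<Sum>i\<in>S. x i) = 0 \<longrightarrow> (\<forall>i\<in>S. x i = 0))"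

end

theory Submission
  imports Defs
begin

lemma lin_on_zero: "lin_on sA sB A B h \<Longrightarrow> 0 \<in> A \<Longrightarrow> h 0 = 0"
  unfolding lin_on_def by (metis add.right_neutral add_left_cancel)

lemma sum_closed:
  assumes "(0::'a::ab_group_add) \<in> A" "\<forall>x\<in>A. \<forall>y\<in>A. x + y \<in> A"
  shows "finite S \<Longrightarrow> (\<forall>i\<in>S. c i \<in> A) \<Longrightarrow> sum c S \<in> A"
  by (induction S rule: finite_induct) (use assms in auto)

lemma lin_on_sum:
  assumes h: "lin_on sA sB A B h" and z: "0 \<in> A" and cl: "\<forall>x\<in>A. \<forall>y\<in>A. x + y \<in> A"
  shows "finite S \<Longrightarrow> (\<forall>i\<in>S. c i \<in> A) \<Longrightarrow> h (sum c S) = (\<Sum>i\<in>S. h (c i))"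
proof (induction S rule: finite_induct)
  case empty
  then show ?case using lin_on_zero[OF h z] by simp
next
  case (insert x F)
  have "sum c F \<in> A" using sum_closed[OF z cl insert(1)] insert(4) by auto
  moreover have "c x \<in> A" using insert(4) by auto
  ultimately show ?case using insert h unfolding lin_on_def by simp
qed

lemma sum_ext:
  assumes "finite U" "S \<subseteq> U"
  shows "(\<Sum>i\<in>U. if i \<in> S then c i else 0) = sum c S"
  by (metis sum.inter_restrict[OF assms(1)] Int_absorb1 assms(2))

context
  fixes sF :: "'r::comm_ring_1 \<Rightarrow> 'f::ab_group_add \<Rightarrow> 'f" and Fi :: "'i \<Rightarrow> 'f set" and H :: "'i set"
  assumes modF: "module sF" and sub: "\<forall>i\<in>H. module.subspace sF (Fi i)"
begin

lemma Fi0: "i \<in> H \<Longrightarrow> 0 \<in> Fi i"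
  using sub module.subspace_0[OF modF] by blast

lemma Fi_add: "i \<in> H \<Longrightarrow> x \<in> Fi i \<Longrightarrow> y \<in> Fi i \<Longrightarrow> x + y \<in> Fi i"
  using sub module.subspace_add[OF modF] by blast

lemma Fi_diff: "i \<in> H \<Longrightarrow> x \<in> Fi i \<Longrightarrow> y \<in> Fi i \<Longrightarrow> x - y \<in> Fi i"
  using sub module.subspace_diff[OF modF] by blast

lemma Fi_scale: "i \<in> H \<Longrightarrow> x \<in> Fi i \<Longrightarrow> sF r x \<in> Fi i"
  using sub module.subspace_scale[OF modF] by blast

lemma Fsum_zero: "0 \<in> Fsum Fi H"
  unfolding Fsum_def by (rule CollectI, rule exI[of _ "{}"], auto)

lemma Fsum_single: "i \<in> H \<Longrightarrow> v \<in> Fi i \<Longrightarrow> v \<in> Fsum Fi H"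
  unfolding Fsum_def by (rule CollectI, rule exI[of _ "{i}"], rule exI[of _ "\<lambda>_. v"], auto)

lemma Fsum_add: 
  assumes "x \<in> Fsum Fi H" "y \<in> Fsum Fi H" shows "x + y \<in> Fsum Fi H"
proof -
  obtain S c where S: "finite S" "S \<subseteq> H" "\<forall>i\<in>S. c i \<in> Fi i" "x = sum c S"
    using assms(1) unfolding Fsum_def by blast
  obtain T e where T: "finite T" "T \<subseteq> H" "\<forall>i\<in>T. e i \<in> Fi i" "y = sum e T"
    using assms(2) unfolding Fsum_def by blast
  let ?c = "\<lambda>i. (if i \<in> S then c i else 0) + (if i \<in> T then e i else 0)"
  have "x + y = sum ?c (S \<union> T)"
    using S T by (simp add: sum.distrib sum_ext)
  moreover have "\<forall>i\<in>S \<union> T. ?c i \<in> Fi i"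
    using S T Fi0 Fi_add by (auto)
  ultimately show ?thesis unfolding Fsum_def using S T by blast
qed

lemma Fsum_scale:
  assumes "x \<in> Fsum Fi H" shows "sF r x \<in> Fsum Fi H"
proof -
  obtain S c where S: "finite S" "S \<subseteq> H" "\<forall>i\<in>S. c i \<in> Fi i" "x = sum c S"
    using assms(1) unfolding Fsum_def by blast
  have "sF r x = (\<Sum>i\<in>S. sF r (c i))" using S module.scale_sum_right[OF modF] by simp
  moreover have "\<forall>i\<in>S. sF r (c i) \<in> Fi i" using S Fi_scale by blast
  ultimately show ?thesis unfolding Fsum_def using S by blast
qed

end

lemma Fsum_mono: "H \<subseteq> H' \<Longrightarrow> Fsum Fi H \<subseteq> Fsum Fi H'"
  unfolding Fsum_def by blast

lemma proj_sum:
  fixes sF :: "'r::comm_ring_1 \<Rightarrow> 'f::ab_group_add \<Rightarrow> 'f" and Fi :: "'i \<Rightarrow> 'f set"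
  assumes modF: "module sF" and dsum: "internal_direct_sum sF Fi I" and HI: "H \<subseteq> I"
    and proj: "\<forall>i\<in>H. projective TYPE('x::ab_group_add) TYPE('y::ab_group_add) sF (Fi i)"
  shows "projective TYPE('x) TYPE('y) sF (Fsum Fi H)"
  unfolding projective_def
proof (intro allI impI)
  fix sX :: "'r \<Rightarrow> 'x \<Rightarrow> 'x" and sY :: "'r \<Rightarrow> 'y \<Rightarrow> 'y" and X Y p \<phi>
  assume A: "module sX \<and> module sY \<and> module.subspace sX X \<and> module.subspace sY Y \<and>
        lin_on sX sY X Y p \<and> p ` X = Y \<and> lin_on sF sY (Fsum Fi H) Y \<phi>"
  have sub: "\<forall>i\<in>H. module.subspace sF (Fi i)" using dsum HI unfolding internal_direct_sum_def by blast
  have indep: "\<And>S x. finite S \<Longrightarrow> S \<subseteq> H \<Longrightarrow> (\<forall>i\<in>S. x i \<in> Fi i) \<Longrightarrow> sum x S = 0 \<Longrightarrow> \<forall>i\<in>S. x i = 0"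
    using dsum HI unfolding internal_direct_sum_def by blast
  have modX: "module sX" and subX: "module.subspace sX X" and pl: "lin_on sX sY X Y p"
    and phil: "lin_on sF sY (Fsum Fi H) Y \<phi>" using A by auto
  have X0: "0 \<in> X" and Xadd: "\<forall>x\<in>X. \<forall>y\<in>X. x + y \<in> X"
    using module.subspace_0[OF modX subX] module.subspace_add[OF modX subX] by auto
  have S0: "0 \<in> Fsum Fi H" and Sadd: "\<forall>x\<in>Fsum Fi H. \<forall>y\<in>Fsum Fi H. x + y \<in> Fsum Fi H"
    using Fsum_zero[OF modF sub] Fsum_add[OF modF sub] by auto
  have "\<forall>i\<in>H. \<exists>\<psi>. lin_on sF sX (Fi i) X \<psi> \<and> (\<forall>a\<in>Fi i. p (\<psi> a) = \<phi> a)"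
  proof
    fix i assume i: "i \<in> H"
    have "Fi i \<subseteq> Fsum Fi H" using Fsum_single[OF modF sub i] by blast
    hence "lin_on sF sY (Fi i) Y \<phi>" using phil unfolding lin_on_def by blast
    thus "\<exists>\<psi>. lin_on sF sX (Fi i) X \<psi> \<and> (\<forall>a\<in>Fi i. p (\<psi> a) = \<phi> a)"
      using proj i A unfolding projective_def by blast
  qed
  then obtain \<Psi> where Psi: "\<forall>i\<in>H. lin_on sF sX (Fi i) X (\<Psi> i) \<and> (\<forall>a\<in>Fi i. p (\<Psi> i a) = \<phi> a)"
    by metis
  have Psi0: "\<And>i. i \<in> H \<Longrightarrow> \<Psi> i 0 = 0" using Psi lin_on_zero Fi0[OF modF sub] by blast
  have PsiX: "\<And>i a. i \<in> H \<Longrightarrow> a \<in> Fi i \<Longrightarrow> \<Psi> i a \<in> X" using Psi unfolding lin_on_def by blast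
  define rep where "rep S c x \<longleftrightarrow> finite S \<and> S \<subseteq> H \<and> (\<forall>i\<in>S. c i \<in> Fi i) \<and> x = sum c S" for S c x
  have extPsi: "(\<Sum>i\<in>U. \<Psi> i (if i \<in> S then c i else 0)) = (\<Sum>i\<in>S. \<Psi> i (c i))"
    if "finite U" "S \<subseteq> U" "U \<subseteq> H" for U S c
  proof -
    have "(\<Sum>i\<in>U. \<Psi> i (if i \<in> S then c i else 0)) = (\<Sum>i\<in>U. if i \<in> S then \<Psi> i (c i) else 0)"
      by (rule sum.cong) (use that Psi0 in auto)
    also have "\<dots> = (\<Sum>i\<in>S. \<Psi> i (c i))" by (rule sum_ext[OF that(1,2)])
    finally show ?thesis .
  qed
  have wd: "(\<Sum>i\<in>S. \<Psi> i (c i)) = (\<Sum>i\<in>T. \<Psi> i (e i))" if "rep S c x" "rep T e x" for S c T e x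
  proof -
    let ?c = "\<lambda>i. if i \<in> S then c i else 0" and ?e = "\<lambda>i. if i \<in> T then e i else 0"
    have fin: "finite (S \<union> T)" "S \<union> T \<subseteq> H" using that unfolding rep_def by auto
    have "sum ?c (S \<union> T) = sum c S" "sum ?e (S \<union> T) = sum e T" using sum_ext[OF fin(1)] by auto
    hence "sum ?c (S \<union> T) = x" "sum ?e (S \<union> T) = x" using that unfolding rep_def by auto
    hence "(\<Sum>i\<in>S \<union> T. ?c i - ?e i) = 0" by (simp add: sum_subtractf)
    moreover have "\<forall>i\<in>S \<union> T. ?c i - ?e i \<in> Fi i"
    proof
      fix i assume i: "i \<in> S \<union> T"
      have "?c i \<in> Fi i" "?e i \<in> Fi i" using that fin i Fi0[OF modF sub] unfolding rep_def by auto
      thus "?c i - ?e i \<in> Fi i" using Fi_diff[OF modF sub] i fin(2) by blast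
    qed
    ultimately have "\<forall>i\<in>S \<union> T. ?c i - ?e i = 0" using indep[OF fin, of "\<lambda>i. ?c i - ?e i"] by blast
    hence "\<forall>i\<in>S \<union> T. ?c i = ?e i" by auto
    hence "(\<Sum>i\<in>S \<union> T. \<Psi> i (?c i)) = (\<Sum>i\<in>S \<union> T. \<Psi> i (?e i))" by (intro sum.cong) auto
    thus ?thesis using extPsi[OF fin(1) _ fin(2)] by simp
  qed
  define \<psi> where "\<psi> x = (SOME v. \<exists>S c. rep S c x \<and> v = (\<Sum>i\<in>S. \<Psi> i (c i)))" for x
  have psi: "\<psi> x = (\<Sum>i\<in>S. \<Psi> i (c i))" if "rep S c x" for S c x
  proof -
    have "\<exists>v. \<exists>S c. rep S c x \<and> v = (\<Sum>i\<in>S. \<Psi> i (c i))" using that by blast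
    from someI_ex[OF this] obtain S' c' where "rep S' c' x" "\<psi> x = (\<Sum>i\<in>S'. \<Psi> i (c' i))"
      unfolding \<psi>_def by blast
    thus ?thesis using wd that by metis
  qed
  have hasrep: "\<exists>S c. rep S c x" if "x \<in> Fsum Fi H" for x
    using that unfolding rep_def Fsum_def by blast
  have inX: "\<psi> a \<in> X" if "a \<in> Fsum Fi H" for a
  proof -
    obtain S c where r: "rep S c a" using hasrep[OF \<open>a \<in> Fsum Fi H\<close>] by blast
    show ?thesis unfolding psi[OF r] using r PsiX unfolding rep_def
      by (intro module.subspace_sum[OF modX subX]) auto
  qed
  have addit: "\<psi> (x + y) = \<psi> x + \<psi> y" if "x \<in> Fsum Fi H" "y \<in> Fsum Fi H" for x y
  proof -
    obtain S c where r1: "rep S c x" using hasrep[OF \<open>x \<in> Fsum Fi H\<close>] by blast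
    obtain T e where r2: "rep T e y" using hasrep[OF \<open>y \<in> Fsum Fi H\<close>] by blast
    let ?c = "\<lambda>i. if i \<in> S then c i else 0" and ?e = "\<lambda>i. if i \<in> T then e i else 0"
    have fin: "finite (S \<union> T)" "S \<union> T \<subseteq> H" using r1 r2 unfolding rep_def by auto
    have mc: "\<forall>i\<in>S \<union> T. ?c i \<in> Fi i" "\<forall>i\<in>S \<union> T. ?e i \<in> Fi i"
      using r1 r2 fin Fi0[OF modF sub] unfolding rep_def by auto
    have "sum ?c (S \<union> T) = sum c S" "sum ?e (S \<union> T) = sum e T" using sum_ext[OF fin(1)] by auto
    hence xy: "x + y = (\<Sum>i\<in>S \<union> T. ?c i + ?e i)" using r1 r2 unfolding rep_def by (simp add: sum.distrib)
    have "\<forall>i\<in>S \<union> T. ?c i + ?e i \<in> Fi i" using mc fin(2) Fi_add[OF modF sub] by blast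
    hence "rep (S \<union> T) (\<lambda>i. ?c i + ?e i) (x + y)"
      unfolding rep_def using fin xy by blast
    hence "\<psi> (x + y) = (\<Sum>i\<in>S \<union> T. \<Psi> i (?c i + ?e i))" by (rule psi)
    also have "\<dots> = (\<Sum>i\<in>S \<union> T. \<Psi> i (?c i) + \<Psi> i (?e i))"
    proof (rule sum.cong[OF refl])
      fix i assume i: "i \<in> S \<union> T"
      hence "?c i \<in> Fi i" "?e i \<in> Fi i" "i \<in> H" using mc fin by auto
      thus "\<Psi> i (?c i + ?e i) = \<Psi> i (?c i) + \<Psi> i (?e i)" using Psi unfolding lin_on_def by blast
    qed
    also have "\<dots> = (\<Sum>i\<in>S. \<Psi> i (c i)) + (\<Sum>i\<in>T. \<Psi> i (e i))"
      using extPsi[OF fin(1) _ fin(2)] by (simp add: sum.distrib)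
    finally show ?thesis using psi[OF r1] psi[OF r2] by simp
  qed
  have scal: "\<psi> (sF r x) = sX r (\<psi> x)" if "x \<in> Fsum Fi H" for r x
  proof -
    obtain S c where r1: "rep S c x" using hasrep[OF \<open>x \<in> Fsum Fi H\<close>] by blast
    have "rep S (\<lambda>i. sF r (c i)) (sF r x)"
      using r1 Fi_scale[OF modF sub] module.scale_sum_right[OF modF] unfolding rep_def by auto
    hence "\<psi> (sF r x) = (\<Sum>i\<in>S. \<Psi> i (sF r (c i)))" by (rule psi)
    also have "\<dots> = (\<Sum>i\<in>S. sX r (\<Psi> i (c i)))"
      by (rule sum.cong) (use r1 Psi in \<open>auto simp: lin_on_def rep_def\<close>)
    also have "\<dots> = sX r (\<psi> x)" using psi[OF r1] module.scale_sum_right[OF modX] by metis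
    finally show ?thesis .
  qed
  have lift: "p (\<psi> a) = \<phi> a" if "a \<in> Fsum Fi H" for a
  proof -
    obtain S c where r: "rep S c a" using hasrep[OF \<open>a \<in> Fsum Fi H\<close>] by blast
    have r': "finite S" "S \<subseteq> H" "\<forall>i\<in>S. c i \<in> Fi i" "a = sum c S" using r unfolding rep_def by auto
    have "p (\<psi> a) = (\<Sum>i\<in>S. p (\<Psi> i (c i)))"
      unfolding psi[OF r] using r' PsiX by (intro lin_on_sum[OF pl X0 Xadd]) auto
    also have "\<dots> = (\<Sum>i\<in>S. \<phi> (c i))" using r' Psi by (intro sum.cong) auto
    also have "\<dots> = \<phi> a" using r' Fsum_single[OF modF sub]
      by (subst r'(4), intro lin_on_sum[OF phil S0 Sadd, symmetric]) auto
    finally show ?thesis .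
  qed
  show "\<exists>\<psi>. lin_on sF sX (Fsum Fi H) X \<psi> \<and> (\<forall>a\<in>Fsum Fi H. p (\<psi> a) = \<phi> a)"
    by (rule exI[of _ \<psi>]) (use inX addit scal lift in \<open>auto simp: lin_on_def\<close>)
qed

theorem lemma3p1:
  fixes sP :: "'r::comm_ring_1 \<Rightarrow> 'p::ab_group_add \<Rightarrow> 'p"
    and sF :: "'r \<Rightarrow> 'f::ab_group_add \<Rightarrow> 'f"
    and sM :: "'r \<Rightarrow> 'm::ab_group_add \<Rightarrow> 'm"
    and f :: "'p \<Rightarrow> 'f" and g :: "'f \<Rightarrow> 'm"
    and n :: nat and d :: "nat \<Rightarrow> 'r" and h :: "nat \<Rightarrow> 'm \<Rightarrow> 'f"
    and Fi :: "'i \<Rightarrow> 'f set" and I :: "'i set"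
    and S1 :: "'i set set"
  assumes modP: "module sP" and modF: "module sF" and modM: "module sM"
    and wsplit: "w_split_via sP sF sM UNIV UNIV UNIV f g n d h"
    and dsum: "internal_direct_sum sF Fi I"
    and proj: "\<forall>i\<in>I. projective TYPE('x::ab_group_add) TYPE('y::ab_group_add) sF (Fi i)"
    and S1_sub: "S1 \<subseteq> Pow I" and S1_ne: "S1 \<noteq> {}"
    and S1_chain: "\<forall>A\<in>S1. \<forall>B\<in>S1. A \<subseteq> B \<or> B \<subseteq> A"
    and S1_inv: "\<forall>Hs\<in>S1. \<forall>k<n. h k ` Msub g Fi Hs \<subseteq> Fsum Fi Hs"
  shows "(\<Union>Hs\<in>S1. Fsum Fi Hs) = Fsum Fi (\<Union>S1)
       \<and> projective TYPE('x) TYPE('y) sF (Fsum Fi (\<Union>S1))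
       \<and> (\<Union>Hs\<in>S1. Psub f g Fi Hs) = Psub f g Fi (\<Union>S1)
       \<and> (\<Union>Hs\<in>S1. Msub g Fi Hs) = Msub g Fi (\<Union>S1)
       \<and> (\<forall>k<n. h k ` Msub g Fi (\<Union>S1) \<subseteq> Fsum Fi (\<Union>S1))
       \<and> w_split_via sP sF sM (Psub f g Fi (\<Union>S1)) (Fsum Fi (\<Union>S1)) (Msub g Fi (\<Union>S1)) f g n d h"
proof -
  let ?H = "\<Union>S1"
  have HI: "?H \<subseteq> I" using S1_sub by blast
  have ch: "subset.chain S1 S1" using S1_chain by (simp add: subset_chain_def)
  have F1: "(\<Union>Hs\<in>S1. Fsum Fi Hs) = Fsum Fi ?H"
  proof
    show "(\<Union>Hs\<in>S1. Fsum Fi Hs) \<subseteq> Fsum Fi ?H" using Fsum_mono[of _ ?H Fi] by blast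
  next
    show "Fsum Fi ?H \<subseteq> (\<Union>Hs\<in>S1. Fsum Fi Hs)"
    proof
      fix x assume "x \<in> Fsum Fi ?H"
      then obtain S c where S: "finite S" "S \<subseteq> ?H" "\<forall>i\<in>S. c i \<in> Fi i" "x = sum c S"
        unfolding Fsum_def by blast
      obtain B where B: "B \<in> S1" "S \<subseteq> B" using finite_subset_Union_chain[OF S(1,2) S1_ne ch] by blast
      have "x \<in> Fsum Fi B" unfolding Fsum_def using S B by blast
      thus "x \<in> (\<Union>Hs\<in>S1. Fsum Fi Hs)" using B by blast
    qed
  qed
  have F2: "projective TYPE('x) TYPE('y) sF (Fsum Fi ?H)"
    using proj_sum[OF modF dsum HI] proj HI by blast
  have F3: "(\<Union>Hs\<in>S1. Psub f g Fi Hs) = Psub f g Fi ?H"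
    using F1 unfolding Psub_def by blast
  have F4: "(\<Union>Hs\<in>S1. Msub g Fi Hs) = Msub g Fi ?H"
    using F1 unfolding Msub_def by blast
  have F5: "\<forall>k<n. h k ` Msub g Fi ?H \<subseteq> Fsum Fi ?H"
  proof (intro allI impI subsetI)
    fix k y assume k: "k < n" and y: "y \<in> h k ` Msub g Fi ?H"
    then obtain m where m: "m \<in> Msub g Fi ?H" "y = h k m" by blast
    then obtain B where "B \<in> S1" "m \<in> Msub g Fi B" using F4 by blast
    hence "y \<in> Fsum Fi B" using S1_inv k m by blast
    thus "y \<in> Fsum Fi ?H" using F1 \<open>B \<in> S1\<close> by blast
  qed
  have W: "exact_ses sP sF sM UNIV UNIV UNIV f g" "GV_ideal n d"
    "\<forall>k<n. lin_on sM sF UNIV UNIV (h k) \<and> (\<forall>x. g (h k x) = sM (d k) x)"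
    using wsplit unfolding w_split_via_def by auto
  have E: "lin_on sP sF UNIV UNIV f" "lin_on sF sM UNIV UNIV g" "inj f" "{x. g x = 0} = range f"
    using W(1) unfolding exact_ses_def by auto
  have F6: "exact_ses sP sF sM (Psub f g Fi ?H) (Fsum Fi ?H) (Msub g Fi ?H) f g"
    unfolding exact_ses_def
  proof (intro conjI)
    show "lin_on sP sF (Psub f g Fi ?H) (Fsum Fi ?H) f"
      using E(1) unfolding lin_on_def Psub_def by auto
    show "lin_on sF sM (Fsum Fi ?H) (Msub g Fi ?H) g"
      using E(2) unfolding lin_on_def Msub_def by auto
    show "inj_on f (Psub f g Fi ?H)" using E(3) by (simp add: inj_on_def inj_def)
    show "g ` Fsum Fi ?H = Msub g Fi ?H" unfolding Msub_def ..
    show "{x \<in> Fsum Fi ?H. g x = 0} = f ` Psub f g Fi ?H"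
      unfolding Psub_def image_vimage_eq using E(4) by auto
  qed
  have F7: "w_split_via sP sF sM (Psub f g Fi ?H) (Fsum Fi ?H) (Msub g Fi ?H) f g n d h"
    unfolding w_split_via_def
  proof (intro conjI F6 W(2) allI impI)
    fix k assume k: "k < n"
    have L: "lin_on sM sF UNIV UNIV (h k)" "\<forall>x. g (h k x) = sM (d k) x" using W(3) k by auto
    show "lin_on sM sF (Msub g Fi ?H) (Fsum Fi ?H) (h k)"
      using L(1) F5 k unfolding lin_on_def by (meson UNIV_I image_subset_iff)
    show "\<forall>x\<in>Msub g Fi ?H. g (h k x) = sM (d k) x" using L(2) by simp
  qed
  show ?thesis using F1 F2 F3 F4 F5 F7 by blast
qed

end
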